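(* For every base $\mathscr{B}$ and IPL formulas $\varphi,\psi,\chi$: if $\Vdash^{*}_{\mathscr{B}}\varphi\wedge\psi$ and $\varphi,\psi\Vdash^{*}_{\mathscr{B}}\chi$, then $\Vdash^{*}_{\mathscr{B}}\chi$.
   Context: Fix a denumerable set $\mathbb{A}$ of atoms. IPL formulas are built from atoms and $\bot$ using $\wedge,\vee,\to$. An atomic rule has the form $(Q_1\triangleright q_1,\dots,Q_n\triangleright q_n)\Rightarrow q$ with $n\ge 0$, $q,q_i\in\mathbb{A}$, $Q_i$ finite sets of atoms; a base is a set of atomic rules. Derivability $\vdash_{\mathscr{B}}$ is the least relation with $S\cup\{q\}\vdash_{\mathscr{B}} q$, and if $(Q_1\triangleright q_1,\dots,Q_n\triangleright q_n)\Rightarrow q\in\mathscr{B}$ and $S\cup Q_i\vdash_{\mathscr{B}} q_i$ for all $i$ then $S\vdash_{\mathscr{B}} q$. $\Vdash^{*}_{\mathscr{B}}$ is defined inductively: $\Vdash^{*}_{\mathscr{B}}p$ iff $\emptyset\vdash_{\mathscr{B}}p$; $\Vdash^{*}_{\mathscr{B}}\varphi\to\psi$ iff $\varphi\Vdash^{*}_{\mathscr{B}}\psi$; $\Vdash^{*}_{\mathscr{B}}\varphi\wedge\psi$ iff for all $\mathscr{C}\supseteq\mathscr{B}$ and atoms $p$, $\varphi,\psi\Vdash^{*}_{\mathscr{C}}p$ implies $\Vdash^{*}_{\mathscr{C}}p$; $\Vdash^{*}_{\mathscr{B}}\varphi\vee\psi$ iff for all $\mathscr{C}\supseteq\mathscr{B}$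 and atoms $p$, if $\varphi\Vdash^{*}_{\mathscr{C}}p$ and $\psi\Vdash^{*}_{\mathscr{C}}p$ then $\Vdash^{*}_{\mathscr{C}}p$; $\Vdash^{*}_{\mathscr{B}}\bot$ iff $\Vdash^{*}_{\mathscr{B}}p$ for all atoms $p$; for nonempty finite $\Gamma$, $\Gamma\Vdash^{*}_{\mathscr{B}}\varphi$ iff for every $\mathscr{C}\supseteq\mathscr{B}$, if $\Vdash^{*}_{\mathscr{C}}\psi$ for all $\psi\in\Gamma$ then $\Vdash^{*}_{\mathscr{C}}\varphi$. *)

theory Defs
  imports Main "HOL-Library.Countable"
begin

datatype 'a fm = Atom 'a | Bot | Conj "'a fm" "'a fm" | Disj "'a fm" "'a fm" | Imp "'a fm" "'a fm"

text \<open>Atomic rule (Q1 |> q1, ..., Qn |> qn) => q, represented as the list of premises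
  (finite atom set Qi, atom qi) and the conclusion q.\<close>
type_synonym 'a rule = "('a set \<times> 'a) list \<times> 'a"

definition is_rule :: "'a rule \<Rightarrow> bool" where
  "is_rule r \<longleftrightarrow> (\<forall>(Q, q) \<in> set (fst r). finite Q)"

definition is_base :: "'a rule set \<Rightarrow> bool" where
  "is_base B \<longleftrightarrow> (\<forall>r\<in>B. is_rule r)"

inductive deriv :: "'a rule set \<Rightarrow> 'a set \<Rightarrow> 'a \<Rightarrow> bool" where
  ax: "q \<in> S \<Longrightarrow> deriv B S q"
| app: "(prems, q) \<in> B \<Longrightarrow> (\<forall>(Qi, qi) \<in> set prems. deriv B (S \<union> Qi) qi) \<Longrightarrow> deriv B S q"

text \<open>Support ||-*_B phi, with the context form Gamma ||-*_B phi for nonempty finite Gamma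
  inlined (in the implication clause Gamma = {phi}).\<close>
primrec supp :: "'a rule set \<Rightarrow> 'a fm \<Rightarrow> bool" where
  "supp B (Atom p) = deriv B {} p"
| "supp B (Imp \<phi> \<psi>) = (\<forall>C. is_base C \<and> B \<subseteq> C \<longrightarrow> supp C \<phi> \<longrightarrow> supp C \<psi>)"
| "supp B (Conj \<phi> \<psi>) = (\<forall>C p. is_base C \<and> B \<subseteq> C \<longrightarrow>
      (\<forall>D. is_base D \<and> C \<subseteq> D \<longrightarrow> supp D \<phi> \<and> supp D \<psi> \<longrightarrow> deriv D {} p) \<longrightarrow> deriv C {} p)"
| "supp B (Disj \<phi> \<psi>) = (\<forall>C p. is_base C \<and> B \<subseteq> C \<longrightarrow>
      (\<forall>D. is_base D \<and> C \<subseteq> D \<longrightarrow> supp D \<phi> \<longrightarrow> deriv D {} p) \<longrightarrow>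
      (\<forall>D. is_base D \<and> C \<subseteq> D \<longrightarrow> supp D \<psi> \<longrightarrow> deriv D {} p) \<longrightarrow> deriv C {} p)"
| "supp B Bot = (\<forall>p. deriv B {} p)"

definition supp_ctx :: "'a rule set \<Rightarrow> 'a fm set \<Rightarrow> 'a fm \<Rightarrow> bool" where
  "supp_ctx B \<Gamma> \<phi> \<longleftrightarrow> (\<forall>C. is_base C \<and> B \<subseteq> C \<longrightarrow> (\<forall>\<psi>\<in>\<Gamma>. supp C \<psi>) \<longrightarrow> supp C \<phi>)"

end

theory Submission
  imports Defs
begin

lemma deriv_mono: "deriv B S q \<Longrightarrow> B \<subseteq> C \<Longrightarrow> deriv C S q"
proof (induction rule: deriv.induct)
  case (ax q S B) then show ?case by (simp add: deriv.ax)
next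
  case (app prems q B S) then show ?case
    by (intro deriv.app[of prems q]) auto
qed

lemma supp_mono: "supp B \<chi> \<Longrightarrow> B \<subseteq> C \<Longrightarrow> supp C \<chi>"
  by (cases \<chi>) (auto intro: deriv_mono)

lemma key:
  assumes "is_base B" "supp B (Conj \<phi> \<psi>)"
    and "\<forall>C. is_base C \<and> B \<subseteq> C \<longrightarrow> supp C \<phi> \<longrightarrow> supp C \<psi> \<longrightarrow> supp C \<chi>"
  shows "supp B \<chi>"
  using assms
proof (induction \<chi> arbitrary: B)
  case (Atom p)
  then show ?case by (simp; blast)
next
  case Bot
  then show ?case by (simp; blast)
next
  case (Imp \<chi>1 \<chi>2)
  show ?case
  proof (simp, intro allI impI, elim conjE)
    fix C assume C: "is_base C" "B \<subseteq> C" "supp C \<chi>1"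
    show "supp C \<chi>2"
    proof (rule Imp.IH(2))
      show "is_base C" by fact
      show "supp C (Conj \<phi> \<psi>)" using Imp.prems(2) C(2) by (rule supp_mono)
      show "\<forall>D. is_base D \<and> C \<subseteq> D \<longrightarrow> supp D \<phi> \<longrightarrow> supp D \<psi> \<longrightarrow> supp D \<chi>2"
      proof (intro allI impI, elim conjE)
        fix D assume D: "is_base D" "C \<subseteq> D" "supp D \<phi>" "supp D \<psi>"
        have "supp D (Imp \<chi>1 \<chi>2)" using Imp.prems(3) D C by blast
        moreover have "supp D \<chi>1" using C(3) D(2) by (rule supp_mono)
        ultimately show "supp D \<chi>2" using D(1) by auto
      qed
    qed
  qed
next
  case (Conj \<chi>1 \<chi>2)
  show ?case
  proof (simp, intro allI impI, elim conjE)
    fix C p assume C: "is_base C" "B \<subseteq> C"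
      and H: "\<forall>D. is_base D \<and> C \<subseteq> D \<longrightarrow> supp D \<chi>1 \<and> supp D \<chi>2 \<longrightarrow> deriv D {} p"
    have PC: "supp C (Conj \<phi> \<psi>)" using Conj.prems(2) C(2) by (rule supp_mono)
    have "\<forall>D. is_base D \<and> C \<subseteq> D \<longrightarrow> supp D \<phi> \<and> supp D \<psi> \<longrightarrow> deriv D {} p"
    proof (intro allI impI, elim conjE)
      fix D assume D: "is_base D" "C \<subseteq> D" "supp D \<phi>" "supp D \<psi>"
      have "supp D (Conj \<chi>1 \<chi>2)" using Conj.prems(3) D C by blast
      then have "(\<forall>E. is_base E \<and> D \<subseteq> E \<longrightarrow> supp E \<chi>1 \<and> supp E \<chi>2 \<longrightarrow> deriv E {} p) \<longrightarrow> deriv D {} p"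
        using D(1) by simp
      moreover have "\<forall>E. is_base E \<and> D \<subseteq> E \<longrightarrow> supp E \<chi>1 \<and> supp E \<chi>2 \<longrightarrow> deriv E {} p"
        using H D(2) by blast
      ultimately show "deriv D {} p" by blast
    qed
    then show "deriv C {} p" using PC C(1) by simp
  qed
next
  case (Disj \<chi>1 \<chi>2)
  show ?case
  proof (simp, intro allI impI, elim conjE)
    fix C p assume C: "is_base C" "B \<subseteq> C"
      and H1: "\<forall>D. is_base D \<and> C \<subseteq> D \<longrightarrow> supp D \<chi>1 \<longrightarrow> deriv D {} p"
      and H2: "\<forall>D. is_base D \<and> C \<subseteq> D \<longrightarrow> supp D \<chi>2 \<longrightarrow> deriv D {} p"
    have PC: "supp C (Conj \<phi> \<psi>)" using Disj.prems(2) C(2) by (rule supp_mono)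
    have "\<forall>D. is_base D \<and> C \<subseteq> D \<longrightarrow> supp D \<phi> \<and> supp D \<psi> \<longrightarrow> deriv D {} p"
    proof (intro allI impI, elim conjE)
      fix D assume D: "is_base D" "C \<subseteq> D" "supp D \<phi>" "supp D \<psi>"
      have "supp D (Disj \<chi>1 \<chi>2)" using Disj.prems(3) D C by blast
      then have "(\<forall>E. is_base E \<and> D \<subseteq> E \<longrightarrow> supp E \<chi>1 \<longrightarrow> deriv E {} p) \<longrightarrow>
          (\<forall>E. is_base E \<and> D \<subseteq> E \<longrightarrow> supp E \<chi>2 \<longrightarrow> deriv E {} p) \<longrightarrow> deriv D {} p"
        using D(1) by simp
      moreover have "\<forall>E. is_base E \<and> D \<subseteq> E \<longrightarrow> supp E \<chi>1 \<longrightarrow> deriv E {} p"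
        using H1 D(2) by blast
      moreover have "\<forall>E. is_base E \<and> D \<subseteq> E \<longrightarrow> supp E \<chi>2 \<longrightarrow> deriv E {} p"
        using H2 D(2) by blast
      ultimately show "deriv D {} p" by blast
    qed
    then show "deriv C {} p" using PC C(1) by simp
  qed
qed

theorem mainTheorem4:
  fixes B :: "('a::countable) rule set" and \<phi> \<psi> \<chi> :: "'a fm"
  assumes "infinite (UNIV :: 'a set)"
    and "is_base B"
    and "supp B (Conj \<phi> \<psi>)"
    and "supp_ctx B {\<phi>, \<psi>} \<chi>"
  shows "supp B \<chi>"
  using assms(2,3) by (rule key) (use assms(4) in \<open>auto simp: supp_ctx_def\<close>)

end
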